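(* Let $\gamma$ be a gauge on $\mathbb{R}^d$ with skewness $\sigma$, let $(D,w)$ and $(C,v)$ be finite positively weighted sets with $\sigma v_C<w_D$, and let $x$ be a Fermat–Weber point of $(D,w)+(C,v)$. Then there exist $e\in\mathbb{R}^d$ and $w_e\in(0,w_D/\sigma)$ such that $x$ is a Fermat–Weber point of $(D,w)+(e,w_e)$.
   Context: A gauge $\gamma$ on $\mathbb{R}^d$ is the Minkowski functional of a convex compact set $B_\gamma$ with the origin in its interior (not necessarily symmetric); its skewness is $\sigma=\sup_{x\ne0}\gamma(x)/\gamma(-x)$. For a weighted set, $w_D=\sum_{d\in D}w_d$. $(D,w)+(C,v)$ denotes $D\cup C$ with weight $w_x+v_x$ at $x$ (zero weight outside the respective set). A Fermat–Weber point of a finite positively weighted set $(S,u)$ is a minimizer of $x\mapsto\sum_{s\in S}u_s\gamma(x-s)$. *)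

theory Defs
  imports "HOL-Analysis.Analysis"
begin

text \<open>A gauge is the Minkowski functional of a convex compact set with the origin in its interior.\<close>
definition gauge_set :: "'a::euclidean_space set \<Rightarrow> bool" where
  "gauge_set B \<longleftrightarrow> convex B \<and> compact B \<and> 0 \<in> interior B"

definition gauge :: "'a::euclidean_space set \<Rightarrow> 'a \<Rightarrow> real" where
  "gauge B x = Inf {t. t \<ge> 0 \<and> x \<in> (\<lambda>y. t *\<^sub>R y) ` B}"

definition skewness :: "'a::euclidean_space set \<Rightarrow> real" where
  "skewness B = (SUP x\<in>-{0}. gauge B x / gauge B (-x))"

text \<open>Weighted sets are pairs (S, u) with S finite and u the weight function.\<close>
definition wsum :: "'a set \<Rightarrow> ('a \<Rightarrow> real) \<Rightarrow> real" where
  "wsum S u = (\<Sum>s\<in>S. u s)"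

definition wadd :: "'a set \<times> ('a \<Rightarrow> real) \<Rightarrow> 'a set \<times> ('a \<Rightarrow> real) \<Rightarrow> 'a set \<times> ('a \<Rightarrow> real)" where
  "wadd Dw Cv = (fst Dw \<union> fst Cv,
     \<lambda>x. (if x \<in> fst Dw then snd Dw x else 0) + (if x \<in> fst Cv then snd Cv x else 0))"

definition fw_obj :: "'a::euclidean_space set \<Rightarrow> 'a set \<times> ('a \<Rightarrow> real) \<Rightarrow> 'a \<Rightarrow> real" where
  "fw_obj B Su x = (\<Sum>s\<in>fst Su. snd Su s * gauge B (x - s))"

definition fermat_weber_point :: "'a::euclidean_space set \<Rightarrow> 'a set \<times> ('a \<Rightarrow> real) \<Rightarrow> 'a \<Rightarrow> bool" where
  "fermat_weber_point B Su x \<longleftrightarrow> (\<forall>y. fw_obj B Su x \<le> fw_obj B Su y)"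

end

theory Submission imports Defs begin

lemma gauge_le:
  assumes "t \<ge> 0" "y \<in> B" shows "gauge B (t *\<^sub>R y) \<le> t"
  unfolding gauge_def
  by (rule cInf_lower) (use assms in \<open>auto intro: bdd_belowI[of _ 0]\<close>)

lemma gauge_ex:
  assumes "gauge_set B" shows "\<exists>t y. t \<ge> 0 \<and> y \<in> B \<and> x = t *\<^sub>R y"
proof -
  from assms obtain r where r: "r>0" "cball 0 r \<subseteq> B"
    unfolding gauge_set_def using mem_interior_cball by blast
  show ?thesis
  proof (cases "x=0")
    case True then show ?thesis using r by (intro exI[of _ 0] exI[of _ 0]) auto
  next
    case False
    have "x = (norm x / r) *\<^sub>R ((r / norm x) *\<^sub>R x)" using False r by simp
    moreover have "(r/norm x) *\<^sub>R x \<in> B" using r False by (intro subsetD[OF r(2)]) auto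
    ultimately show ?thesis using r by (intro exI[of _ "norm x / r"]) auto
  qed
qed

lemma gauge_ge:
  assumes "gauge_set B" and "\<And>t y. t \<ge> 0 \<Longrightarrow> y \<in> B \<Longrightarrow> x = t *\<^sub>R y \<Longrightarrow> c \<le> t"
  shows "c \<le> gauge B x"
  unfolding gauge_def
proof (rule cInf_greatest)
  show "{t. 0 \<le> t \<and> x \<in> (\<lambda>y. t *\<^sub>R y) ` B} \<noteq> {}" using gauge_ex[OF assms(1), of x] by auto
qed (use assms in auto)

lemma gauge_nonneg: "gauge_set B \<Longrightarrow> 0 \<le> gauge B x"
  by (rule gauge_ge) auto

lemma gauge_B: "y \<in> B \<Longrightarrow> gauge B y \<le> 1"
  using gauge_le[of 1 y B] by simp

lemma gauge_upper:
  assumes "r > 0" "cball 0 r \<subseteq> B" shows "gauge B x \<le> norm x / r"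
proof (cases "x = 0")
  case True
  have "gauge B (0 *\<^sub>R 0) \<le> 0" using assms by (intro gauge_le) auto
  then show ?thesis using True by simp
next
  case False
  have "x = (norm x / r) *\<^sub>R ((r / norm x) *\<^sub>R x)" using False assms by simp
  moreover have "(r/norm x) *\<^sub>R x \<in> B" using assms False by (intro subsetD[OF assms(2)]) auto
  ultimately show ?thesis using assms gauge_le[of "norm x / r" "(r/norm x) *\<^sub>R x" B] by auto
qed

lemma gauge_lower:
  assumes "gauge_set B" "R > 0" "\<forall>y\<in>B. norm y \<le> R" shows "norm x / R \<le> gauge B x"
proof (rule gauge_ge[OF assms(1)])
  fix t y assume "0 \<le> t" "y \<in> B" "x = t *\<^sub>R y"
  then have "norm x \<le> t * R" using assms by (simp add: mult_left_mono)
  then show "norm x / R \<le> t" using assms by (simp add: divide_le_eq)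
qed

lemma gauge_sub:
  assumes "gauge_set B" shows "gauge B (x + y) \<le> gauge B x + gauge B y"
proof -
  have cv: "convex B" using assms gauge_set_def by auto
  have 0: "0 \<in> B" using assms gauge_set_def interior_subset by blast
  have key: "gauge B (x+y) \<le> t + s" if "t \<ge> 0" "a \<in> B" "x = t *\<^sub>R a" "s \<ge> 0" "b \<in> B" "y = s *\<^sub>R b" for t a s b
  proof (cases "t + s = 0")
    case True
    then have "t = 0" "s = 0" using that by auto
    then have "x + y = 0 *\<^sub>R 0" using that by simp
    then show ?thesis using gauge_le[of 0 0 B] 0 True by simp
  next
    case False
    then have ts: "t + s > 0" using that by auto
    have "x + y = (t+s) *\<^sub>R ((t/(t+s)) *\<^sub>R a + (s/(t+s)) *\<^sub>R b)"
      using that ts by (simp add: scaleR_add_right)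
    moreover have "(t/(t+s)) *\<^sub>R a + (s/(t+s)) *\<^sub>R b \<in> B"
      using mem_convex_alt[OF cv that(2) that(5) that(1) that(4) ts] .
    ultimately show ?thesis using gauge_le[of "t+s" _ B] ts by auto
  qed
  have "gauge B (x+y) - gauge B y \<le> gauge B x"
  proof (rule gauge_ge[OF assms])
    fix t a assume ta: "0 \<le> t" "a \<in> B" "x = t *\<^sub>R a"
    have "gauge B (x+y) - t \<le> gauge B y"
      by (rule gauge_ge[OF assms]) (use key ta in fastforce)
    then show "gauge B (x+y) - gauge B y \<le> t" by simp
  qed
  then show ?thesis by simp
qed

lemma gauge_scale:
  assumes "gauge_set B" "a \<ge> 0" shows "gauge B (a *\<^sub>R x) \<le> a * gauge B x"
proof (cases "a = 0")
  case True
  have 0: "0 \<in> B" using assms gauge_set_def interior_subset by blast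
  show ?thesis using True gauge_le[of 0 0 B] 0 by simp
next
  case False
  then have a: "a > 0" using assms by simp
  have "gauge B (a *\<^sub>R x) / a \<le> gauge B x"
  proof (rule gauge_ge[OF assms(1)])
    fix t y assume "0 \<le> t" "y \<in> B" "x = t *\<^sub>R y"
    then have "gauge B (a *\<^sub>R x) \<le> a * t" using gauge_le[of "a*t" y B] a by simp
    then show "gauge B (a *\<^sub>R x) / a \<le> t" using a by (simp add: divide_le_eq mult.commute)
  qed
  then show ?thesis using a by (simp add: divide_le_eq mult.commute)
qed

lemma gauge_convex:
  assumes "gauge_set B" "u \<ge> 0" "v \<ge> 0"
  shows "gauge B (u *\<^sub>R a + v *\<^sub>R b) \<le> u * gauge B a + v * gauge B b"
  using gauge_sub[OF assms(1), of "u *\<^sub>R a" "v *\<^sub>R b"] gauge_scale[OF assms(1,2), of a]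
    gauge_scale[OF assms(1,3), of b] by linarith


definition wf :: "'a::euclidean_space set \<Rightarrow> 'a set \<Rightarrow> ('a \<Rightarrow> real) \<Rightarrow> 'a \<Rightarrow> real" where
  "wf B D w y = (\<Sum>d\<in>D. w d * gauge B (y - d))"

lemma fw_wadd:
  assumes "finite D" "finite C"
  shows "fw_obj B (wadd (D, w) (C, v)) y = wf B D w y + wf B C v y"
proof -
  have "fw_obj B (wadd (D, w) (C, v)) y =
     (\<Sum>s\<in>D\<union>C. (if s \<in> D then w s else 0) * gauge B (y - s)) +
     (\<Sum>s\<in>D\<union>C. (if s \<in> C then v s else 0) * gauge B (y - s))"
    unfolding fw_obj_def wadd_def fst_conv snd_conv by (simp add: distrib_right sum.distrib)
  also have "(\<Sum>s\<in>D\<union>C. (if s \<in> D then w s else 0) * gauge B (y - s)) = wf B D w y"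
  proof -
    have "(\<Sum>s\<in>D\<union>C. (if s \<in> D then w s else 0) * gauge B (y - s)) =
      (\<Sum>s\<in>D\<union>C. (if s \<in> D then w s * gauge B (y - s) else 0))" by (rule sum.cong) auto
    also have "\<dots> = (\<Sum>s\<in>(D\<union>C) \<inter> D. w s * gauge B (y - s))"
      using assms by (intro sum.inter_restrict[symmetric]) auto
    finally show ?thesis unfolding wf_def by (simp add: Int_absorb1)
  qed
  also have "(\<Sum>s\<in>D\<union>C. (if s \<in> C then v s else 0) * gauge B (y - s)) = wf B C v y"
  proof -
    have "(\<Sum>s\<in>D\<union>C. (if s \<in> C then v s else 0) * gauge B (y - s)) =
      (\<Sum>s\<in>D\<union>C. (if s \<in> C then v s * gauge B (y - s) else 0))" by (rule sum.cong) auto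
    also have "\<dots> = (\<Sum>s\<in>(D\<union>C) \<inter> C. v s * gauge B (y - s))"
      using assms by (intro sum.inter_restrict[symmetric]) auto
    finally show ?thesis unfolding wf_def by (simp add: Int_absorb1)
  qed
  finally show ?thesis .
qed

lemma wf_single: "wf B {e} (\<lambda>_. we) y = we * gauge B (y - e)"
  unfolding wf_def by simp

lemma wf_convex:
  assumes "gauge_set B" "\<forall>d\<in>D. w d \<ge> 0" "u \<ge> 0" "v \<ge> 0" "u + v = 1"
  shows "wf B D w (u *\<^sub>R a + v *\<^sub>R b) \<le> u * wf B D w a + v * wf B D w b"
proof -
  have "wf B D w (u *\<^sub>R a + v *\<^sub>R b) = (\<Sum>d\<in>D. w d * gauge B (u *\<^sub>R (a - d) + v *\<^sub>R (b - d)))"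
    unfolding wf_def
  proof (rule sum.cong)
    fix d
    have "u *\<^sub>R a + v *\<^sub>R b - d = u *\<^sub>R (a - d) + v *\<^sub>R (b - d)"
      using assms(5) by (simp add: algebra_simps flip: scaleR_add_left)
    then show "w d * gauge B (u *\<^sub>R a + v *\<^sub>R b - d) = w d * gauge B (u *\<^sub>R (a - d) + v *\<^sub>R (b - d))" by simp
  qed simp
  also have "\<dots> \<le> (\<Sum>d\<in>D. w d * (u * gauge B (a - d) + v * gauge B (b - d)))"
    by (rule sum_mono) (use mult_left_mono[OF gauge_convex[OF assms(1,3,4)]] assms(2) in auto)
  also have "\<dots> = u * wf B D w a + v * wf B D w b"
    unfolding wf_def by (simp add: algebra_simps sum.distrib sum_distrib_left)
  finally show ?thesis .
qed

lemma wf_sub: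
  assumes "gauge_set B" "\<forall>d\<in>D. w d \<ge> 0"
  shows "wf B D w (x + h) - wf B D w x \<le> (\<Sum>d\<in>D. w d) * gauge B h"
proof -
  have "wf B D w (x + h) \<le> (\<Sum>d\<in>D. w d * (gauge B h + gauge B (x - d)))"
    unfolding wf_def
  proof (rule sum_mono)
    fix d assume "d \<in> D"
    have eq: "x + h - d = h + (x - d)" by simp
    have "gauge B (x + h - d) \<le> gauge B h + gauge B (x - d)" unfolding eq by (rule gauge_sub[OF assms(1)])
    then show "w d * gauge B (x + h - d) \<le> w d * (gauge B h + gauge B (x - d))"
      using assms \<open>d\<in>D\<close> by (auto intro: mult_left_mono)
  qed
  also have "\<dots> = (\<Sum>d\<in>D. w d) * gauge B h + wf B D w x"
    unfolding wf_def by (simp add: distrib_left sum.distrib sum_distrib_right)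
  finally show ?thesis by simp
qed

lemma convex_strict_epi:
  assumes "\<And>a b u v. u\<ge>0 \<Longrightarrow> v\<ge>0 \<Longrightarrow> u+v=1 \<Longrightarrow> f (u *\<^sub>R a + v *\<^sub>R b) \<le> u * f a + v * f b"
  shows "convex {p. f (fst p) < snd p}"
proof (rule convexI)
  fix p q :: "'a \<times> real" and u v :: real
  assume p: "p \<in> {p. f (fst p) < snd p}" and q: "q \<in> {p. f (fst p) < snd p}"
    and uv: "0 \<le> u" "0 \<le> v" "u + v = 1"
  have 1: "f (u *\<^sub>R fst p + v *\<^sub>R fst q) \<le> u * f (fst p) + v * f (fst q)" using assms uv by blast
  have 2: "u * f (fst p) + v * f (fst q) < u * snd p + v * snd q"
  proof (cases "u = 0")
    case True then show ?thesis using uv q by simp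
  next
    case False
    then have "u * f (fst p) < u * snd p" using uv p by simp
    moreover have "v * f (fst q) \<le> v * snd q" using uv q by (simp add: mult_left_mono)
    ultimately show ?thesis by simp
  qed
  show "u *\<^sub>R p + v *\<^sub>R q \<in> {p. f (fst p) < snd p}" using 1 2 by simp
qed

lemma convex_hypo:
  assumes "\<And>a b u v. u\<ge>0 \<Longrightarrow> v\<ge>0 \<Longrightarrow> u+v=1 \<Longrightarrow> f (u *\<^sub>R a + v *\<^sub>R b) \<le> u * f a + v * f b"
  shows "convex {p. f (fst p) \<le> - snd p}"
proof (rule convexI)
  fix p q :: "'a \<times> real" and u v :: real
  assume p: "p \<in> {p. f (fst p) \<le> - snd p}" and q: "q \<in> {p. f (fst p) \<le> - snd p}"
    and uv: "0 \<le> u" "0 \<le> v" "u + v = 1"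
  have 1: "f (u *\<^sub>R fst p + v *\<^sub>R fst q) \<le> u * f (fst p) + v * f (fst q)" using assms uv by blast
  have "u * f (fst p) \<le> u * (- snd p)" by (rule mult_left_mono) (use uv p in auto)
  moreover have "v * f (fst q) \<le> v * (- snd q)" by (rule mult_left_mono) (use uv q in auto)
  ultimately show "u *\<^sub>R p + v *\<^sub>R q \<in> {p. f (fst p) \<le> - snd p}" using 1 by (simp add: algebra_simps)
qed

lemma limit_aux:
  fixes A alpha b s :: real
  assumes "\<And>t. t > s \<Longrightarrow> A + alpha * t \<le> b" "alpha \<le> 0"
  shows "A + alpha * s \<le> b"
proof (rule ccontr)
  assume c: "\<not> ?thesis"
  define d where "d = A + alpha * s - b"
  have d: "d > 0" using c d_def by simp
  define t where "t = s + d / (2 * (1 - alpha))"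
  have t: "t > s" using d assms(2) t_def by simp
  have "alpha * (t - s) = d * (alpha / (2 * (1 - alpha)))" using t_def assms(2) by simp
  moreover have "alpha / (2 * (1 - alpha)) \<ge> -1/2" using assms(2) by (simp add: field_simps)
  moreover have "d * (alpha / (2 * (1 - alpha))) \<ge> d * (-1/2)"
    by (rule mult_left_mono) (use calculation d in auto)
  ultimately have "alpha * (t - s) \<ge> - d / 2" by simp
  moreover have "alpha * t = alpha * s + alpha * (t - s)" by (simp add: algebra_simps)
  ultimately have "A + alpha * t > b" using d_def d by linarith
  then show False using assms(1)[OF t] by simp
qed

lemma skew_pos:
  assumes "gauge_set B" shows "skewness B > 0"
proof -
  obtain r where r: "r>0" "cball 0 r \<subseteq> B"
    using assms unfolding gauge_set_def using mem_interior_cball by blast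
  obtain R where R: "R > 0" "\<forall>y\<in>B. norm y \<le> R"
    using assms unfolding gauge_set_def using compact_imp_bounded bounded_pos by metis
  have bd: "gauge B z / gauge B (-z) \<le> R / r" if "z \<noteq> 0" for z
  proof -
    have a: "gauge B z \<le> norm z / r" by (rule gauge_upper[OF r])
    have b: "norm (-z) / R \<le> gauge B (-z)" by (rule gauge_lower[OF assms R])
    have nz: "norm z / R > 0" using that R by simp
    have "gauge B z / gauge B (-z) \<le> (norm z / r) / (norm z / R)"
      by (rule frac_le) (use a b nz r gauge_nonneg[OF assms] in auto)
    also have "\<dots> = R / r" using that r R by (simp add: field_simps)
    finally show ?thesis .
  qed
  obtain b0 :: 'a where b0: "b0 \<noteq> 0" using nonzero_Basis nonempty_Basis by blast
  have pos: "gauge B b0 / gauge B (-b0) > 0"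
  proof -
    have "norm b0 / R \<le> gauge B b0" by (rule gauge_lower[OF assms R])
    moreover have "norm (-b0) / R \<le> gauge B (-b0)" by (rule gauge_lower[OF assms R])
    moreover have "norm b0 / R > 0" using b0 R by simp
    ultimately show ?thesis by simp
  qed
  have "gauge B b0 / gauge B (-b0) \<le> skewness B"
    unfolding skewness_def
    by (rule cSUP_upper) (use b0 bd in \<open>auto intro!: bdd_aboveI[of _ "R/r"]\<close>)
  then show ?thesis using pos by simp
qed


theorem mainTheorem18:
  fixes B :: "'a::euclidean_space set" and D C :: "'a set" and w v :: "'a \<Rightarrow> real" and x :: 'a
  assumes "gauge_set B"
    and "finite D" and "\<forall>d\<in>D. w d > 0"
    and "finite C" and "\<forall>c\<in>C. v c > 0"
    and "skewness B * wsum C v < wsum D w"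
    and "fermat_weber_point B (wadd (D, w) (C, v)) x"
  shows "\<exists>e we. 0 < we \<and> we < wsum D w / skewness B \<and>
           fermat_weber_point B (wadd (D, w) ({e}, \<lambda>_. we)) x"
proof -
  note gB = assms(1)
  define fD where "fD = wf B D w"
  define fC where "fC = wf B C v"
  have wpos: "\<forall>d\<in>D. w d \<ge> 0" "\<forall>c\<in>C. v c \<ge> 0" using assms(3,5) by auto
  have opt: "fD x + fC x \<le> fD y + fC y" for y
    using assms(7) unfolding fermat_weber_point_def fD_def fC_def
    using fw_wadd[OF assms(2,4)] by metis
  define S where "S = {p. (\<lambda>y. fD y - fD x) (fst p) < snd p}"
  define T where "T = {p. (\<lambda>y. fC y - fC x) (fst p) \<le> - snd p}"
  have cS: "convex S" unfolding S_def
  proof (rule convex_strict_epi)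
    fix a b :: 'a and u v :: real assume uv: "u\<ge>0" "v\<ge>0" "u+v=1"
    have "fD x = u * fD x + v * fD x" using uv by (simp add: algebra_simps flip: distrib_right)
    then show "fD (u *\<^sub>R a + v *\<^sub>R b) - fD x \<le> u * (fD a - fD x) + v * (fD b - fD x)"
      using wf_convex[OF gB wpos(1), of u v a b] uv unfolding fD_def by (simp add: algebra_simps)
  qed
  have cT: "convex T" unfolding T_def
  proof (rule convex_hypo)
    fix a b :: 'a and u v :: real assume uv: "u\<ge>0" "v\<ge>0" "u+v=1"
    have "fC x = u * fC x + v * fC x" using uv by (simp add: algebra_simps flip: distrib_right)
    then show "fC (u *\<^sub>R a + v *\<^sub>R b) - fC x \<le> u * (fC a - fC x) + v * (fC b - fC x)"
      using wf_convex[OF gB wpos(2), of u v a b] uv unfolding fC_def by (simp add: algebra_simps)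
  qed
  have "(x, 1) \<in> S" "(x, 0) \<in> T" unfolding S_def T_def by auto
  moreover have "S \<inter> T = {}"
  proof -
    have False if "p \<in> S" "p \<in> T" for p
      using that opt[of "fst p"] unfolding S_def T_def by auto
    then show ?thesis by blast
  qed
  ultimately obtain a b where ab: "a \<noteq> 0" "\<forall>p\<in>S. inner a p \<le> b" "\<forall>p\<in>T. inner a p \<ge> b"
    using separating_hyperplane_sets[OF cS cT] by blast
  obtain a1 alpha where a: "a = (a1, alpha)" by (cases a)
  have hS: "inner a1 y + alpha * t \<le> b" if "fD y - fD x < t" for y t
    using ab(2) that a unfolding S_def by auto
  have hT: "inner a1 y + alpha * t \<ge> b" if "fC y - fC x \<le> - t" for y t
    using ab(3) that a unfolding T_def by auto
  have x1: "inner a1 x \<ge> b" using hT[of x 0] by simp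
  have al: "alpha \<le> 0" using hS[of x 1] x1 by simp
  have x2: "inner a1 x \<le> b" using limit_aux[of 0 "inner a1 x" alpha b] hS[of x] al by simp
  have bx: "b = inner a1 x" using x1 x2 by simp
  have an: "alpha \<noteq> 0"
  proof
    assume a0: "alpha = 0"
    have "inner a1 y \<le> b" for y using hS[of y "fD y - fD x + 1"] a0 by simp
    moreover have "inner a1 y \<ge> b" for y using hT[of y "- (fC y - fC x)"] a0 by simp
    ultimately have "inner a1 a1 = b" "inner a1 0 = b" by (meson order_antisym)+
    then have "a1 = 0" by simp
    then show False using ab(1) a a0 by (simp add: zero_prod_def)
  qed
  define beta where "beta = - alpha"
  have beta: "beta > 0" using al an beta_def by simp
  define g where "g = (- 1 / beta) *\<^sub>R a1"
  have hD: "- inner g (y - x) \<le> fD y - fD x" for y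
  proof -
    have "inner a1 y + alpha * (fD y - fD x) \<le> b"
      using limit_aux[of "fD y - fD x" "inner a1 y" alpha b] hS[of y] al by simp
    then have "inner a1 (y - x) \<le> beta * (fD y - fD x)" using bx beta_def by (simp add: inner_diff_right)
    then have "inner a1 (y - x) / beta \<le> fD y - fD x" using beta by (simp add: divide_le_eq mult.commute)
    then show ?thesis unfolding g_def by simp
  qed
  have hC: "inner g (y - x) \<le> fC y - fC x" for y
  proof -
    have "inner a1 y + alpha * (- (fC y - fC x)) \<ge> b" using hT[of y "- (fC y - fC x)"] by simp
    then have "- inner a1 (y - x) \<le> beta * (fC y - fC x)" using bx beta_def by (simp add: inner_diff_right algebra_simps)
    then have "- inner a1 (y - x) / beta \<le> fC y - fC x" using beta by (metis pos_divide_le_eq mult.commute)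
    then show ?thesis unfolding g_def by simp
  qed
  define vC where "vC = wsum C v"
  define wD where "wD = wsum D w"
  have gv: "inner g h \<le> vC * gauge B h" for h
    using hC[of "x + h"] wf_sub[OF gB wpos(2), of x h] unfolding fC_def vC_def wsum_def by simp
  have cB: "compact B" and B0: "0 \<in> B" using gB unfolding gauge_set_def using interior_subset by auto
  obtain b0 where b0: "b0 \<in> B" "\<forall>y\<in>B. inner g y \<le> inner g b0"
    using continuous_attains_sup[OF cB _ continuous_on_inner[OF continuous_on_const continuous_on_id, of B g]] B0
    by auto
  define lam where "lam = inner g b0"
  have lam0: "lam \<ge> 0" using b0 B0 lam_def by force
  have gl: "inner g h \<le> lam * gauge B h" for h
  proof (cases "lam = 0")
    case True
    obtain t y where ty: "t \<ge> 0" "y \<in> B" "h = t *\<^sub>R y" using gauge_ex[OF gB] by blast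
    then have "inner g y \<le> 0" using b0 True lam_def by auto
    then show ?thesis using ty True by (simp add: mult_nonneg_nonpos)
  next
    case False
    then have lp: "lam > 0" using lam0 by simp
    have "inner g h / lam \<le> gauge B h"
    proof (rule gauge_ge[OF gB])
      fix t y assume ty: "0 \<le> t" "y \<in> B" "h = t *\<^sub>R y"
      have "inner g h = t * inner g y" using ty by simp
      also have "\<dots> \<le> t * lam" using b0 ty lam_def by (simp add: mult_left_mono)
      finally show "inner g h / lam \<le> t" using lp by (simp add: divide_le_eq)
    qed
    then show ?thesis using lp by (simp add: divide_le_eq mult.commute)
  qed
  have vC0: "vC \<ge> 0" unfolding vC_def wsum_def using wpos(2) by (simp add: sum_nonneg)
  have lamv: "lam \<le> vC"
  proof -
    have "lam \<le> vC * gauge B b0" using gv[of b0] lam_def by simp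
    also have "\<dots> \<le> vC * 1" using gauge_B[OF b0(1)] vC0 by (intro mult_left_mono) auto
    finally show ?thesis by simp
  qed
  have sp: "skewness B > 0" by (rule skew_pos[OF gB])
  have wD0: "wD > 0" using assms(6) sp vC0 unfolding vC_def wD_def
    by (smt (verit) mult_nonneg_nonneg)
  have vlt: "vC < wD / skewness B" using assms(6) sp unfolding vC_def wD_def
    by (simp add: less_divide_eq mult.commute)
  have fw2: "fw_obj B (wadd (D, w) ({e}, \<lambda>_. we)) y = fD y + we * gauge B (y - e)" for e we y
    using fw_wadd[OF assms(2), of "{e}" B w "\<lambda>_. we" y] wf_single unfolding fD_def by simp
  show ?thesis
  proof (cases "lam = 0")
    case True
    define we where "we = wD / skewness B / 2"
    have "0 < wD / skewness B" using wD0 sp by simp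
    then have "0 < we" "we < wD / skewness B" using we_def by auto
    moreover have "fermat_weber_point B (wadd (D, w) ({x}, \<lambda>_. we)) x"
      unfolding fermat_weber_point_def fw2
    proof
      fix y
      have "inner g (y - x) \<le> 0" using gl[of "y - x"] True by simp
      moreover have "0 \<le> we * gauge B (y - x)" using \<open>0 < we\<close> gauge_nonneg[OF gB] by simp
      ultimately show "fD x + we * gauge B (x - x) \<le> fD y + we * gauge B (y - x)"
        using hD[of y] gauge_le[of 0 0 B] B0 gauge_nonneg[OF gB, of 0] by simp
    qed
    ultimately show ?thesis unfolding wD_def by blast
  next
    case False
    then have lp: "lam > 0" using lam0 by simp
    have "lam < wD / skewness B" using lamv vlt by simp
    moreover have "fermat_weber_point B (wadd (D, w) ({x - b0}, \<lambda>_. lam)) x"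
      unfolding fermat_weber_point_def fw2
    proof
      fix y
      have e1: "y - (x - b0) = (y - x) + b0" by simp
      have "inner g ((y - x) + b0) \<le> lam * gauge B ((y - x) + b0)" by (rule gl)
      then have "inner g (y - x) + lam \<le> lam * gauge B (y - (x - b0))"
        unfolding e1 by (simp add: inner_add_right lam_def)
      moreover have "lam * gauge B b0 \<le> lam * 1" using gauge_B[OF b0(1)] lp by (intro mult_left_mono) auto
      ultimately show "fD x + lam * gauge B (x - (x - b0)) \<le> fD y + lam * gauge B (y - (x - b0))"
        using hD[of y] by simp
    qed
    ultimately show ?thesis using lp unfolding wD_def by blast
  qed
qed

end
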